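(* Fix an integer $n\ge 1$ and a real number $\epsilon>0$. Then there exist finitely many series of $\mathbb{Q}$-factorial toric singularities in $T^n$ such that an $n$-dimensional $\mathbb{Q}$-factorial toric singularity has minimal log-discrepancy greater than $\epsilon$ if and only if it belongs to at least one of these series. The same holds with "greater than $\epsilon$" replaced by "greater than or equal to $\epsilon$".
   Context: Let $T^n=\mathbb{R}^n/\mathbb{Z}^n$, identified with the set of points $(x_1,\dots,x_n)$ with $0\le x_i<1$, and let $e_1,\dots,e_n$ be the standard basis of $\mathbb{R}^n$. An $n$-dimensional $\mathbb{Q}$-factorial toric singularity is given by a rational simplicial cone in $\mathbb{R}^n$ together with a lattice; after a linear change of coordinates sending the primitive lattice points of the rays of the cone to $e_1,\dots,e_n$, the cone is the standard positive orthant and the lattice $L$ contains $\mathbb{Z}^n$ with finite index. Thus such a singularity is encoded by the finite subgroup $G=L/\mathbb{Z}^n\subset T^n$, which satisfies $G\cap (\mathbb{R}/\mathbb{Z})\cdot e_i=\{0\}$ for every $i$; conversely every finite subgroup $G\subset T^n$ with this property defines such a singularity (standard orthant, lattice $L=$ preimage of $G$ in $\mathbb{R}^n$). The minimal log-discrepancy of the singularity defined by $G$ is the minimum, over the nonzero elements of $G$, of the sum of coordinates $x_1+\dots+x_n$ of the element written with $0\le x_i<1$. A series of $\mathbb{Q}$-factorial toric singularities is a closed subgroup $V\subset T^n$ together with finitely many proper closed subgroups $V_i\subset V$ and, for each $i$, finitely many proper closed subgroups $V_{ij}\subset V_i$. A toric singularity belongs to this series if and only if it is defined by a finite subgroup $G\subset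 V$ such that $G\cap V_i\subset\bigcup_j V_{ij}$ for all $i$. *)

theory Defs
  imports "HOL-Analysis.Analysis"
begin

text \<open>The torus T^n = R^n/Z^n, with n = CARD('n), represented by the fundamental
  domain [0,1)^n inside real^'n.  The quotient map R^n -> T^n is tproj.\<close>

definition torus :: "(real ^ 'n) set" where
  "torus = {x. \<forall>i. 0 \<le> x $ i \<and> x $ i < 1}"

definition tproj :: "real ^ 'n \<Rightarrow> real ^ 'n" where
  "tproj x = (\<chi> i. frac (x $ i))"

definition tadd :: "real ^ 'n \<Rightarrow> real ^ 'n \<Rightarrow> real ^ 'n" where
  "tadd x y = tproj (x + y)"

definition tneg :: "real ^ 'n \<Rightarrow> real ^ 'n" where
  "tneg x = tproj (- x)"

definition tsubgroup :: "(real ^ 'n) set \<Rightarrow> bool" where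
  "tsubgroup H \<longleftrightarrow> H \<subseteq> torus \<and> 0 \<in> H \<and>
     (\<forall>x\<in>H. \<forall>y\<in>H. tadd x y \<in> H) \<and> (\<forall>x\<in>H. tneg x \<in> H)"

text \<open>Closed in the quotient topology of T^n: the preimage in R^n is closed.\<close>
definition closed_tsubgroup :: "(real ^ 'n) set \<Rightarrow> bool" where
  "closed_tsubgroup H \<longleftrightarrow> tsubgroup H \<and> closed (tproj -` H)"

definition taxis :: "'n \<Rightarrow> (real ^ 'n) set" where
  "taxis i = tproj ` {t *\<^sub>R axis i 1 | t. True}"

definition qf_toric :: "(real ^ 'n) set \<Rightarrow> bool" where
  "qf_toric G \<longleftrightarrow> tsubgroup G \<and> finite G \<and> (\<forall>i. G \<inter> taxis i = {0})"

text \<open>Minimal log discrepancy: minimum of coordinate sums over nonzero elements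
  (as an extended real; +infinity for the trivial group, where the min is empty).\<close>
definition mld :: "(real ^ 'n) set \<Rightarrow> ereal" where
  "mld G = Inf {ereal (\<Sum>i\<in>UNIV. g $ i) | g. g \<in> G \<and> g \<noteq> 0}"

text \<open>A series: (V, [(V_i, [V_ij, ...]), ...]).\<close>
type_synonym ('n) tseries = "(real ^ 'n) set \<times> ((real ^ 'n) set \<times> (real ^ 'n) set list) list"

definition is_series :: "('n::finite) tseries \<Rightarrow> bool" where
  "is_series S \<longleftrightarrow> closed_tsubgroup (fst S) \<and>
     (\<forall>(Vi, Vijs) \<in> set (snd S). closed_tsubgroup Vi \<and> Vi \<subset> fst S \<and>
        (\<forall>Vij \<in> set Vijs. closed_tsubgroup Vij \<and> Vij \<subset> Vi))"

definition belongs :: "(real ^ 'n) set \<Rightarrow> ('n::finite) tseries \<Rightarrow> bool" where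
  "belongs G S \<longleftrightarrow> qf_toric G \<and> G \<subseteq> fst S \<and>
     (\<forall>(Vi, Vijs) \<in> set (snd S). G \<inter> Vi \<subseteq> \<Union> (set Vijs))"

end

theory Submission
  imports Defs "HOL-Real_Asymp.Real_Asymp" "HOL-Library.Function_Algebras"
begin

definition ip :: "('n::finite \<Rightarrow> int) \<Rightarrow> real^'n \<Rightarrow> real" where
  "ip a x = (\<Sum>i\<in>UNIV. of_int (a i) * x $ i)"

definition Aset :: "('n::finite \<Rightarrow> int) set \<Rightarrow> (real^'n) set" where
  "Aset S = {x\<in>torus. \<forall>a\<in>S. ip a x \<in> \<int>}"

lemma tproj_nth: "tproj x $ i = frac (x $ i)"
  by (simp add: tproj_def)

lemma tproj_in_torus: "tproj x \<in> torus"
  by (simp add: torus_def tproj_nth frac_lt_1)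

lemma tproj_id: "x \<in> torus \<Longrightarrow> tproj x = x"
  by (simp add: torus_def tproj_def vec_eq_iff frac_eq)

lemma ip_add: "ip a (x + y) = ip a x + ip a y"
  by (simp add: ip_def algebra_simps sum.distrib)

lemma ip_neg: "ip a (- x) = - ip a x"
  by (simp add: ip_def sum_negf)

lemma ip_diff: "ip a (x - y) = ip a x - ip a y"
  by (simp add: ip_def algebra_simps sum_subtractf)

lemma ip_zero[simp]: "ip a 0 = 0"
  by (simp add: ip_def)

lemma ip_tproj: "ip a (tproj x) - ip a x \<in> \<int>"
proof -
  have "ip a (tproj x) - ip a x = (\<Sum>i\<in>UNIV. - (of_int (a i * \<lfloor>x $ i\<rfloor>)))"
    by (simp add: ip_def tproj_nth frac_def algebra_simps sum_subtractf[symmetric])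
  also have "\<dots> \<in> \<int>" by (intro Ints_sum Ints_minus Ints_of_int)
  finally show ?thesis .
qed

lemma Ints_diff_cancel: "(x::real) - y \<in> \<int> \<Longrightarrow> (x \<in> \<int> \<longleftrightarrow> y \<in> \<int>)"
  by (metis Ints_add Ints_diff add_diff_cancel_left' diff_add_cancel)

lemma ip_tproj_Ints: "ip a (tproj x) \<in> \<int> \<longleftrightarrow> ip a x \<in> \<int>"
  using Ints_diff_cancel[OF ip_tproj] .

lemma Aset_sub_torus: "Aset S \<subseteq> torus" by (auto simp: Aset_def)

lemma zero_torus: "0 \<in> torus" by (simp add: torus_def)

lemma Aset_tsubgroup: "tsubgroup (Aset S)"
  unfolding tsubgroup_def
proof (intro conjI ballI)
  show "Aset S \<subseteq> torus" by (rule Aset_sub_torus)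
  show "0 \<in> Aset S" by (simp add: Aset_def zero_torus)
  fix x y assume x: "x \<in> Aset S" and y: "y \<in> Aset S"
  show "tadd x y \<in> Aset S"
    using x y by (auto simp: Aset_def tadd_def tproj_in_torus ip_tproj_Ints ip_add)
next
  fix x assume x: "x \<in> Aset S"
  show "tneg x \<in> Aset S"
    using x by (auto simp: Aset_def tneg_def tproj_in_torus ip_tproj_Ints ip_neg)
qed

lemma continuous_ip: "continuous_on UNIV (ip a)"
  unfolding ip_def by (intro continuous_intros)

lemma Aset_preimage: "tproj -` Aset S = (\<Inter>a\<in>S. ip a -` \<int>)"
  by (auto simp: Aset_def tproj_in_torus ip_tproj_Ints)

lemma closed_Aset: "closed_tsubgroup (Aset S)"
  unfolding closed_tsubgroup_def Aset_preimage
  by (auto intro!: Aset_tsubgroup closed_INT closed_vimage continuous_ip)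

definition good :: "(real^'n \<Rightarrow> bool) \<Rightarrow> (real^'n) set \<Rightarrow> bool" where
  "good bad G \<longleftrightarrow> (\<forall>g\<in>G. \<not> bad g)"

definition Char :: "(real^'n \<Rightarrow> bool) \<Rightarrow> (real^'n) set \<Rightarrow> ('n::finite) tseries set \<Rightarrow> bool" where
  "Char bad V Ss \<longleftrightarrow> finite Ss \<and> (\<forall>S\<in>Ss. is_series S \<and> fst S \<subseteq> V) \<and>
     (\<forall>G. qf_toric G \<and> G \<subseteq> V \<longrightarrow> (good bad G \<longleftrightarrow> (\<exists>S\<in>Ss. belongs G S)))"

lemma Char_union:
  assumes "finite K" "\<And>k. k\<in>K \<Longrightarrow> Char bad (W k) (Ss k)" "\<And>k. k\<in>K \<Longrightarrow> W k \<subseteq> V"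
    "\<And>G. qf_toric G \<Longrightarrow> G \<subseteq> V \<Longrightarrow> good bad G \<Longrightarrow> (\<exists>k\<in>K. G \<subseteq> W k)"
  shows "Char bad V (\<Union>k\<in>K. Ss k)"
  unfolding Char_def
proof (intro conjI allI impI ballI)
  show "finite (\<Union>k\<in>K. Ss k)" using assms(1,2) by (auto simp: Char_def)
next
  fix S assume "S \<in> (\<Union>k\<in>K. Ss k)"
  then obtain k where k: "k \<in> K" "S \<in> Ss k" by auto
  then show "is_series S" "fst S \<subseteq> V" using assms(2,3)[OF k(1)] by (auto simp: Char_def)
next
  fix G assume G: "qf_toric G \<and> G \<subseteq> V"
  show "good bad G = (\<exists>S\<in>\<Union>k\<in>K. Ss k. belongs G S)"
  proof
    assume g: "good bad G"
    then obtain k where k: "k \<in> K" "G \<subseteq> W k" using assms(4) G by blast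
    then show "\<exists>S\<in>\<Union>k\<in>K. Ss k. belongs G S" using assms(2)[OF k(1)] G g by (auto simp: Char_def)
  next
    assume "\<exists>S\<in>\<Union>k\<in>K. Ss k. belongs G S"
    then obtain k S where k: "k \<in> K" "S \<in> Ss k" "belongs G S" by auto
    have "fst S \<subseteq> W k" using assms(2)[OF k(1)] k(2) by (auto simp: Char_def)
    then have "G \<subseteq> W k" using k(3) by (auto simp: belongs_def)
    then show "good bad G" using assms(2)[OF k(1)] k G by (auto simp: Char_def)
  qed
qed

lemma zero_taxis: "0 \<in> taxis i"
proof -
  have "0 = tproj (0 *\<^sub>R axis i (1::real))" by (simp add: tproj_def vec_eq_iff)
  then show ?thesis unfolding taxis_def by blast
qed

lemma tsubgroup_Int: "tsubgroup G \<Longrightarrow> tsubgroup H \<Longrightarrow> tsubgroup (G \<inter> H)"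
  by (auto simp: tsubgroup_def)

lemma qf_toric_Int: "qf_toric G \<Longrightarrow> tsubgroup H \<Longrightarrow> qf_toric (G \<inter> H)"
  unfolding qf_toric_def
proof (intro conjI allI)
  assume a: "tsubgroup G \<and> finite G \<and> (\<forall>i. G \<inter> taxis i = {0})" and h: "tsubgroup H"
  show "tsubgroup (G \<inter> H)" using a h tsubgroup_Int by blast
  show "finite (G \<inter> H)" using a by auto
  fix i
  have "0 \<in> H" using h by (auto simp: tsubgroup_def)
  then show "G \<inter> H \<inter> taxis i = {0}" using a zero_taxis[of i] by auto
qed

definition conds :: "(real^'n) set \<Rightarrow> ('n::finite) tseries \<Rightarrow> ((real ^ 'n) set \<times> (real ^ 'n) set list) list" where
  "conds W S' = (if fst S' = W then [] else [(W, [fst S'])]) @ snd S'"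

definition comb :: "(real^'n) set \<Rightarrow> 'i list \<Rightarrow> ('i \<Rightarrow> (real^'n) set) \<Rightarrow> ('i \<Rightarrow> ('n::finite) tseries) \<Rightarrow> 'n tseries" where
  "comb V xs Vi f = (V, concat (map (\<lambda>i. conds (Vi i) (f i)) xs))"

lemma is_series_sub: "is_series S \<Longrightarrow> (Vk, Vks) \<in> set (snd S) \<Longrightarrow> Vk \<subseteq> fst S"
  by (auto simp: is_series_def)

lemma conds_ok:
  assumes "is_series S'" "fst S' \<subseteq> W" "G \<subseteq> V"
  shows "(\<forall>(Vk, Vks) \<in> set (conds W S'). G \<inter> Vk \<subseteq> \<Union> (set Vks)) \<longleftrightarrow>
         (G \<inter> W \<subseteq> fst S' \<and> (\<forall>(Vk, Vks) \<in> set (snd S'). (G \<inter> W) \<inter> Vk \<subseteq> \<Union> (set Vks)))"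
proof -
  have eq: "(G \<inter> W) \<inter> Vk = G \<inter> Vk" if "(Vk, Vks) \<in> set (snd S')" for Vk Vks
    using is_series_sub[OF assms(1) that] assms(2) by auto
  have r: "(\<forall>(Vk, Vks) \<in> set (snd S'). (G \<inter> W) \<inter> Vk \<subseteq> \<Union> (set Vks)) \<longleftrightarrow>
     (\<forall>(Vk, Vks) \<in> set (snd S'). G \<inter> Vk \<subseteq> \<Union> (set Vks))"
  proof (intro ball_cong refl)
    fix p assume p: "p \<in> set (snd S')"
    obtain Vk Vks where pe: "p = (Vk, Vks)" by fastforce
    have "G \<inter> W \<inter> Vk = G \<inter> Vk" using eq p pe by blast
    then show "(case p of (Vk, Vks) \<Rightarrow> (G \<inter> W) \<inter> Vk \<subseteq> \<Union> (set Vks)) = (case p of (Vk, Vks) \<Rightarrow> G \<inter> Vk \<subseteq> \<Union> (set Vks))"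
      unfolding pe by simp
  qed
  show ?thesis
  proof (cases "fst S' = W")
    case True
    then show ?thesis unfolding conds_def r by auto
  next
    case False
    then show ?thesis unfolding conds_def r by auto
  qed
qed

lemma belongs_comb:
  assumes "\<And>i. i \<in> set xs \<Longrightarrow> is_series (f i) \<and> fst (f i) \<subseteq> Vi i \<and> tsubgroup (Vi i)"
    and "G \<subseteq> V" and "qf_toric G"
  shows "belongs G (comb V xs Vi f) \<longleftrightarrow> (\<forall>i\<in>set xs. belongs (G \<inter> Vi i) (f i))"
proof -
  have "belongs G (comb V xs Vi f) \<longleftrightarrow>
     (\<forall>i\<in>set xs. \<forall>(Vk, Vks) \<in> set (conds (Vi i) (f i)). G \<inter> Vk \<subseteq> \<Union> (set Vks))"
    using assms(2,3) unfolding belongs_def comb_def by auto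
  also have "\<dots> \<longleftrightarrow> (\<forall>i\<in>set xs. belongs (G \<inter> Vi i) (f i))"
  proof (intro ball_cong refl)
    fix i assume i: "i \<in> set xs"
    have q: "qf_toric (G \<inter> Vi i)" using qf_toric_Int assms(1)[OF i] assms(3) by blast
    show "(\<forall>(Vk, Vks) \<in> set (conds (Vi i) (f i)). G \<inter> Vk \<subseteq> \<Union> (set Vks)) = belongs (G \<inter> Vi i) (f i)"
      using conds_ok[of "f i" "Vi i" G V] assms(1)[OF i] assms(2) q unfolding belongs_def by auto
  qed
  finally show ?thesis .
qed

lemma is_series_comb:
  assumes "closed_tsubgroup V"
    and "\<And>i. i \<in> set xs \<Longrightarrow> is_series (f i) \<and> fst (f i) \<subseteq> Vi i \<and> closed_tsubgroup (Vi i) \<and> Vi i \<subset> V"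
  shows "is_series (comb V xs Vi f)"
  unfolding is_series_def comb_def fst_conv snd_conv
proof (intro conjI ballI)
  show "closed_tsubgroup V" by fact
  fix p assume "p \<in> set (concat (map (\<lambda>i. conds (Vi i) (f i)) xs))"
  then obtain i where i: "i \<in> set xs" and p: "p \<in> set (conds (Vi i) (f i))" by auto
  note a = assms(2)[OF i]
  obtain Vk Vks where pe: "p = (Vk, Vks)" by fastforce
  show "case p of (Vi', Vijs) \<Rightarrow> closed_tsubgroup Vi' \<and> Vi' \<subset> V \<and> (\<forall>Vij\<in>set Vijs. closed_tsubgroup Vij \<and> Vij \<subset> Vi')"
  proof (cases "p \<in> set (snd (f i))")
    case True
    then have m: "(Vk, Vks) \<in> set (snd (f i))" using pe by simp
    have "closed_tsubgroup Vk" "Vk \<subset> fst (f i)" "\<forall>Vij\<in>set Vks. closed_tsubgroup Vij \<and> Vij \<subset> Vk"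
      using a m unfolding is_series_def by fastforce+
    moreover have "Vk \<subset> V" using calculation(2) a by blast
    ultimately show ?thesis unfolding pe by simp
  next
    case False
    then have "fst (f i) \<noteq> Vi i" "Vk = Vi i" "Vks = [fst (f i)]" using p pe by (auto simp: conds_def split: if_splits)
    then show ?thesis using a unfolding is_series_def pe by auto
  qed
qed

lemma Char_thin:
  assumes "closed_tsubgroup V" "finite I"
    and "\<And>i. i\<in>I \<Longrightarrow> closed_tsubgroup (Vi i) \<and> Vi i \<subset> V"
    and "\<And>i. i\<in>I \<Longrightarrow> Char bad (Vi i) (Ss i)"
    and "\<And>G. qf_toric G \<Longrightarrow> G \<subseteq> V \<Longrightarrow> (good bad G \<longleftrightarrow> (\<forall>i\<in>I. good bad (G \<inter> Vi i)))"
  shows "\<exists>Ss'. Char bad V Ss'"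
proof -
  obtain xs where xs: "set xs = I" using assms(2) finite_list by blast
  define Ss' where "Ss' = comb V xs Vi ` PiE I Ss"
  have fin: "finite Ss'" unfolding Ss'_def
    using assms(2,4) by (auto intro!: finite_PiE simp: Char_def)
  have mem: "is_series (f i) \<and> fst (f i) \<subseteq> Vi i \<and> closed_tsubgroup (Vi i) \<and> Vi i \<subset> V \<and> tsubgroup (Vi i)"
    if "f \<in> PiE I Ss" "i \<in> I" for f i
    using that assms(3,4)[OF that(2)] by (auto simp: Char_def closed_tsubgroup_def)
  have "Char bad V Ss'"
    unfolding Char_def
  proof (intro conjI allI impI ballI)
    show "finite Ss'" by fact
  next
    fix S assume "S \<in> Ss'"
    then obtain f where f: "f \<in> PiE I Ss" "S = comb V xs Vi f" unfolding Ss'_def by auto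
    show "is_series S" unfolding f(2)
      by (rule is_series_comb[OF assms(1)]) (use mem f(1) xs in blast)
    show "fst S \<subseteq> V" using f by (simp add: comb_def)
  next
    fix G assume G: "qf_toric G \<and> G \<subseteq> V"
    have "good bad G \<longleftrightarrow> (\<forall>i\<in>I. good bad (G \<inter> Vi i))" using assms(5) G by blast
    also have "\<dots> \<longleftrightarrow> (\<forall>i\<in>I. \<exists>S\<in>Ss i. belongs (G \<inter> Vi i) S)"
    proof (intro ball_cong refl)
      fix i assume i: "i \<in> I"
      have "qf_toric (G \<inter> Vi i)" using qf_toric_Int G assms(3)[OF i] by (auto simp: closed_tsubgroup_def)
      then show "good bad (G \<inter> Vi i) = (\<exists>S\<in>Ss i. belongs (G \<inter> Vi i) S)"
        using assms(4)[OF i] by (auto simp: Char_def)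
    qed
    also have "\<dots> \<longleftrightarrow> (\<exists>f\<in>PiE I Ss. \<forall>i\<in>I. belongs (G \<inter> Vi i) (f i))"
    proof
      assume "\<forall>i\<in>I. \<exists>S\<in>Ss i. belongs (G \<inter> Vi i) S"
      then obtain f where f: "\<forall>i\<in>I. f i \<in> Ss i \<and> belongs (G \<inter> Vi i) (f i)" by metis
      show "\<exists>f\<in>PiE I Ss. \<forall>i\<in>I. belongs (G \<inter> Vi i) (f i)"
        by (rule bexI[of _ "restrict f I"]) (use f in auto)
    qed auto
    also have "\<dots> \<longleftrightarrow> (\<exists>S\<in>Ss'. belongs G S)"
    proof -
      have "belongs G (comb V xs Vi f) \<longleftrightarrow> (\<forall>i\<in>I. belongs (G \<inter> Vi i) (f i))" if "f \<in> PiE I Ss" for f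
        using belongs_comb[of xs f Vi G V] mem[OF that] xs G by auto
      then show ?thesis unfolding Ss'_def by auto
    qed
    finally show "good bad G = (\<exists>S\<in>Ss'. belongs G S)" .
  qed
  then show ?thesis by blast
qed

definition grp :: "'a::ab_group_add set \<Rightarrow> bool" where
  "grp L \<longleftrightarrow> 0 \<in> L \<and> (\<forall>a\<in>L. \<forall>b\<in>L. a + b \<in> L) \<and> (\<forall>a\<in>L. - a \<in> L)"

lemma grp_nat_mult: "grp H \<Longrightarrow> a \<in> H \<Longrightarrow> of_nat m * (a::int) \<in> H"
  by (induction m) (auto simp: grp_def algebra_simps)

lemma grp_int_mult: assumes "grp H" "a \<in> H" shows "k * (a::int) \<in> H"
proof (cases "k \<ge> 0")
  case True
  then show ?thesis using grp_nat_mult[OF assms, of "nat k"] by simp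
next
  case False
  then have "- (of_nat (nat (-k)) * a) \<in> H" using grp_nat_mult[OF assms, of "nat (-k)"] assms(1)
    by (auto simp: grp_def)
  then show ?thesis using False by simp
qed

definition dmin :: "int set \<Rightarrow> nat" where
  "dmin H = (LEAST d::nat. d > 0 \<and> int d \<in> H)"

lemma dmin_props:
  assumes "grp H" "H \<noteq> {0}"
  shows "dmin H > 0" "int (dmin H) \<in> H" "\<And>h. h \<in> H \<Longrightarrow> int (dmin H) dvd h"
proof -
  obtain x where x: "x \<in> H" "x \<noteq> 0" using assms by (auto simp: grp_def)
  have "\<exists>d::nat. d > 0 \<and> int d \<in> H"
  proof (cases "x > 0")
    case True then show ?thesis using x by (intro exI[of _ "nat x"]) auto
  next
    case False
    then have "-x > 0" "-x \<in> H" using x assms(1) by (auto simp: grp_def)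
    then show ?thesis by (intro exI[of _ "nat (-x)"]) auto
  qed
  then have ex: "dmin H > 0 \<and> int (dmin H) \<in> H" unfolding dmin_def by (rule LeastI_ex)
  then show "dmin H > 0" "int (dmin H) \<in> H" by auto
  fix h assume h: "h \<in> H"
  define d where "d = int (dmin H)"
  have "h mod d = h + (- (h div d) * d)" by (simp add: minus_div_mult_eq_mod[symmetric])
  also have "\<dots> \<in> H" using h grp_int_mult[OF assms(1), of d "- (h div d)"] ex assms(1)
    unfolding d_def grp_def by auto
  finally have m: "h mod d \<in> H" .
  have "h mod d = 0"
  proof (rule ccontr)
    assume "h mod d \<noteq> 0"
    moreover have "h mod d \<ge> 0" "h mod d < d" using ex d_def by auto
    ultimately have "nat (h mod d) > 0 \<and> int (nat (h mod d)) \<in> H" using m by auto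
    then have "dmin H \<le> nat (h mod d)" unfolding dmin_def by (rule Least_le)
    then show False using \<open>h mod d < d\<close> d_def \<open>h mod d \<ge> 0\<close> by linarith
  qed
  then show "int (dmin H) dvd h" unfolding d_def by auto
qed

lemma wf_int_grp: "wf {(H', H). grp (H::int set) \<and> grp H' \<and> H \<subset> H'}"
proof (rule wf_subset)
  show "wf (inv_image (less_than <*lex*> less_than) (\<lambda>H. (if H = {0} then 1::nat else 0, dmin H)))"
    by auto
  show "{(H', H). grp (H::int set) \<and> grp H' \<and> H \<subset> H'} \<subseteq> inv_image (less_than <*lex*> less_than) (\<lambda>H. (if H = {0} then 1::nat else 0, dmin H))"
  proof (rule subrelI)
    fix H' H :: "int set" assume "(H', H) \<in> {(H', H). grp (H::int set) \<and> grp H' \<and> H \<subset> H'}"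
    then have g: "grp H" "grp H'" and s: "H \<subseteq> H'" "H \<noteq> H'" by auto
    have "0 \<in> H" using g by (auto simp: grp_def)
    then have H'0: "H' \<noteq> {0}" using s by auto
    show "(H', H) \<in> inv_image (less_than <*lex*> less_than) (\<lambda>H. (if H = {0} then 1::nat else 0, dmin H))"
    proof (cases "H = {0}")
      case True then show ?thesis using H'0 by simp
    next
      case False
      note a = dmin_props[OF g(1) False] and b = dmin_props[OF g(2) H'0]
      have le: "dmin H' \<le> dmin H" unfolding dmin_def[of H']
        using a(1,2) s by (intro Least_le) auto
      have "dmin H' \<noteq> dmin H"
      proof
        assume eq: "dmin H' = dmin H"
        have "H' \<subseteq> H"
        proof
          fix h assume "h \<in> H'"
          then obtain k where "h = int (dmin H) * k" using b(3) eq by (auto elim: dvdE)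
          then show "h \<in> H" using grp_int_mult[OF g(1) a(2), of k] by (simp add: mult.commute)
        qed
        then show False using s by auto
      qed
      then show ?thesis using le False H'0 by simp
    qed
  qed
qed

definition supp :: "'n set \<Rightarrow> ('n \<Rightarrow> int) set" where
  "supp I = {a. \<forall>i. i \<notin> I \<longrightarrow> a i = 0}"

lemma grp_proj: "grp (L::('n \<Rightarrow> int) set) \<Longrightarrow> grp ((\<lambda>a. a j) ` L)"
  unfolding grp_def
proof (intro conjI ballI)
  assume g: "0 \<in> L \<and> (\<forall>a\<in>L. \<forall>b\<in>L. a + b \<in> L) \<and> (\<forall>a\<in>L. - a \<in> L)"
  show "0 \<in> (\<lambda>a. a j) ` L" using g by (intro rev_image_eqI[of 0]) auto
  fix x y assume "x \<in> (\<lambda>a. a j) ` L" "y \<in> (\<lambda>a. a j) ` L"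
  then obtain a b where "a \<in> L" "b \<in> L" "x = a j" "y = b j" by auto
  then show "x + y \<in> (\<lambda>a. a j) ` L" using g by (intro rev_image_eqI[of "a + b"]) auto
next
  fix x assume g: "0 \<in> L \<and> (\<forall>a\<in>L. \<forall>b\<in>L. a + b \<in> L) \<and> (\<forall>a\<in>L. - a \<in> L)"
    and "x \<in> (\<lambda>a. a j) ` L"
  then obtain a where "a \<in> L" "x = a j" by auto
  then show "- x \<in> (\<lambda>a. a j) ` L" using g by (intro rev_image_eqI[of "- a"]) auto
qed

lemma wf_fun_grp_supp:
  assumes "finite I"
  shows "wf {(L', L). grp (L::('n \<Rightarrow> int) set) \<and> grp L' \<and> L \<subset> L' \<and> L' \<subseteq> supp I}"
  using assms
proof (induction I rule: finite_induct)
  case empty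
  have e: "{(L', L). grp (L::('n \<Rightarrow> int) set) \<and> grp L' \<and> L \<subset> L' \<and> L' \<subseteq> supp {}} = {}"
  proof (rule ccontr)
    assume "{(L', L). grp (L::('n \<Rightarrow> int) set) \<and> grp L' \<and> L \<subset> L' \<and> L' \<subseteq> supp {}} \<noteq> {}"
    then obtain L L' :: "('n \<Rightarrow> int) set" where "grp L" "L \<subseteq> L'" "L \<noteq> L'" "L' \<subseteq> supp {}" by auto
    moreover have "supp {} = {0}" by (auto simp: supp_def)
    ultimately have "L' \<subseteq> {0}" "0 \<in> L" by (auto simp: grp_def)
    then have "L' \<subseteq> L" by auto
    then show False using \<open>L \<subseteq> L'\<close> \<open>L \<noteq> L'\<close> by auto
  qed
  show ?case unfolding e by (simp add: wf_def)
next
  case (insert j I)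
  define pr where "pr L = (\<lambda>a. a j) ` L" for L :: "('n \<Rightarrow> int) set"
  define ke where "ke L = {a\<in>L. a j = 0}" for L :: "('n \<Rightarrow> int) set"
  let ?RZ = "{(H', H). grp (H::int set) \<and> grp H' \<and> H \<subset> H'}"
  let ?RI = "{(L', L). grp (L::('n \<Rightarrow> int) set) \<and> grp L' \<and> L \<subset> L' \<and> L' \<subseteq> supp I}"
  show ?case
  proof (rule wf_subset)
    show "wf (inv_image (?RZ <*lex*> ?RI) (\<lambda>L. (pr L, ke L)))"
      using wf_int_grp insert.IH by auto
    show "{(L', L). grp (L::('n \<Rightarrow> int) set) \<and> grp L' \<and> L \<subset> L' \<and> L' \<subseteq> supp (insert j I)}
       \<subseteq> inv_image (?RZ <*lex*> ?RI) (\<lambda>L. (pr L, ke L))"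
    proof (rule subrelI)
      fix L' L :: "('n \<Rightarrow> int) set"
      assume "(L', L) \<in> {(L', L). grp (L::('n \<Rightarrow> int) set) \<and> grp L' \<and> L \<subset> L' \<and> L' \<subseteq> supp (insert j I)}"
      then have g: "grp L" "grp L'" and s: "L \<subseteq> L'" "L \<noteq> L'" and su: "L' \<subseteq> supp (insert j I)" by auto
      have gp: "grp (pr L)" "grp (pr L')" using g unfolding pr_def by (auto intro: grp_proj)
      have gk: "grp (ke L)" "grp (ke L')" using g unfolding grp_def ke_def by auto
      have sp: "pr L \<subseteq> pr L'" "ke L \<subseteq> ke L'" using s unfolding pr_def ke_def by auto
      have suk: "ke L' \<subseteq> supp I" using su unfolding ke_def supp_def by auto
      have ne: "\<not> (pr L = pr L' \<and> ke L = ke L')"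
      proof
        assume e: "pr L = pr L' \<and> ke L = ke L'"
        have "L' \<subseteq> L"
        proof
          fix a' assume a': "a' \<in> L'"
          then have "a' j \<in> pr L" using e unfolding pr_def by auto
          then obtain a where a: "a \<in> L" "a j = a' j" unfolding pr_def by auto
          have "a' + - a \<in> L'" using a' a s g(2) unfolding grp_def by blast
          then have "a' + - a \<in> ke L" using e a unfolding ke_def by auto
          then have "(a' + - a) + a \<in> L" using a g(1) unfolding ke_def grp_def by blast
          then show "a' \<in> L" by simp
        qed
        then show False using s by auto
      qed
      show "(L', L) \<in> inv_image (?RZ <*lex*> ?RI) (\<lambda>L. (pr L, ke L))"
      proof (cases "pr L = pr L'")
        case True
        then have "ke L \<subset> ke L'" using ne sp by blast
        then have "(ke L', ke L) \<in> ?RI" using gk suk by blast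
        then show ?thesis using True by simp
      next
        case False
        then have "(pr L', pr L) \<in> ?RZ" using gp sp by blast
        then show ?thesis by simp
      qed
    qed
  qed
qed

lemma wf_fun_grp: "wf {(L', L). grp (L::('n::finite \<Rightarrow> int) set) \<and> grp L' \<and> L \<subset> L'}"
  using wf_fun_grp_supp[of "UNIV :: 'n set"] by (simp add: supp_def)

definition Ann :: "(real^'n) set \<Rightarrow> ('n::finite \<Rightarrow> int) set" where
  "Ann V = {a. \<forall>x\<in>V. ip a x \<in> \<int>}"

lemma ip_lin_a: "ip (a + b) x = ip a x + ip b x" "ip (- a) x = - ip a x"
  by (auto simp: ip_def algebra_simps sum.distrib sum_negf)

lemma ip_0a: "ip 0 x = 0" by (simp add: ip_def)

lemma grp_Ann: "grp (Ann V)"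
  unfolding grp_def Ann_def by (auto simp: ip_lin_a ip_0a)

lemma Aset_Ann: "Aset (Ann (Aset S)) = Aset S"
  unfolding Aset_def Ann_def by auto

lemma wf_Aset: "wf {(S', S). Aset S' \<subset> (Aset S :: (real^'n::finite) set)}"
proof (rule wf_subset)
  show "wf (inv_image {(L', L). grp (L::('n::finite \<Rightarrow> int) set) \<and> grp L' \<and> L \<subset> L'} (\<lambda>S. Ann (Aset S)))"
    using wf_fun_grp by auto
  show "{(S', S). Aset S' \<subset> (Aset S :: (real^'n::finite) set)} \<subseteq> inv_image {(L', L). grp (L::('n::finite \<Rightarrow> int) set) \<and> grp L' \<and> L \<subset> L'} (\<lambda>S. Ann (Aset S))"
  proof (rule subrelI)
    fix S' S :: "('n \<Rightarrow> int) set"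
    assume "(S', S) \<in> {(S', S). Aset S' \<subset> (Aset S :: (real^'n::finite) set)}"
    then have s: "Aset S' \<subseteq> Aset S" "Aset S' \<noteq> Aset S" by auto
    have "Ann (Aset S) \<subseteq> Ann (Aset S')" using s unfolding Ann_def by auto
    moreover have "Ann (Aset S) \<noteq> Ann (Aset S')" using s Aset_Ann by metis
    ultimately show "(S', S) \<in> inv_image {(L', L). grp L \<and> grp L' \<and> L \<subset> L'} (\<lambda>S. Ann (Aset S))"
      using grp_Ann by auto
  qed
qed

definition ee :: "real \<Rightarrow> complex" where "ee t = cis (2 * pi * t)"

lemma ee_add: "ee (a + b) = ee a * ee b"
  by (simp add: ee_def cis_mult algebra_simps)

lemma ee_int: "k \<in> \<int> \<Longrightarrow> ee k = 1"
  by (simp add: ee_def)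

lemma ee_add_int: "k \<in> \<int> \<Longrightarrow> ee (a + k) = ee a"
  by (simp add: ee_add ee_int)

lemma ee_eq_1: "ee t = 1 \<Longrightarrow> t \<in> \<int>"
proof -
  assume "ee t = 1"
  then have "cos (2 * pi * t) = 1" unfolding ee_def by (metis cis.sel(1) one_complex.sel(1))
  then have "\<exists>n::int. 2 * pi * t = n * 2 * pi" using cos_one_2pi_int by blast
  then obtain n :: int where "2 * pi * t = real_of_int n * 2 * pi" by blast
  then have "t = n" by simp
  then show ?thesis by simp
qed

lemma ee_cnj: "cnj (ee t) = ee (- t)"
  by (simp add: ee_def cis_cnj)

lemma ee_0[simp]: "ee 0 = 1" by (simp add: ee_def)

lemma ee_prod: "finite A \<Longrightarrow> (\<Prod>i\<in>A. ee (f i)) = ee (\<Sum>i\<in>A. f i)"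
  by (induction A rule: finite_induct) (simp_all add: ee_add)

lemma ee_pow: "ee t ^ k = ee (real k * t)"
proof (induction k)
  case (Suc k)
  have "ee t ^ Suc k = ee t * ee (real k * t)" using Suc by simp
  also have "\<dots> = ee (t + real k * t)" by (simp add: ee_add)
  finally show ?case by (simp add: algebra_simps)
qed simp

lemma tproj_add_left: "tproj (tproj x + y) = tproj (x + y)"
proof -
  have "frac (frac a + b) = frac (a + b)" for a b :: real
    by (metis add.commute frac_add_int_right frac_def add_diff_eq Ints_of_int
              diff_add_cancel frac_add_of_int_right minus_add_cancel)
  then show ?thesis by (simp add: tproj_def vec_eq_iff)
qed

lemma tproj_add_right: "tproj (x + tproj y) = tproj (x + y)"
  using tproj_add_left[of y x] by (simp add: add.commute)

lemma tadd_cancel: "g \<in> torus \<Longrightarrow> tadd (tneg h) (tadd h g) = g"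
  unfolding tadd_def tneg_def
  by (simp add: tproj_add_left tproj_add_right tproj_id)

lemma tadd_cancel2: "g \<in> torus \<Longrightarrow> tadd h (tadd (tneg h) g) = g"
  unfolding tadd_def tneg_def
  by (simp add: tproj_add_left tproj_add_right tproj_id)

lemma ip_tadd: "ip a (tadd h g) - (ip a h + ip a g) \<in> \<int>"
  unfolding tadd_def using ip_tproj[of a "h + g"] by (simp add: ip_add)

lemma char_sum:
  assumes "tsubgroup G" "finite G"
  shows "(\<Sum>g\<in>G. ee (ip a g)) = (if (\<forall>g\<in>G. ip a g \<in> \<int>) then of_nat (card G) else 0)"
proof (cases "\<forall>g\<in>G. ip a g \<in> \<int>")
  case True
  then show ?thesis by (simp add: ee_int)
next
  case False
  then obtain h where h: "h \<in> G" "ip a h \<notin> \<int>" by auto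
  have tor: "G \<subseteq> torus" using assms(1) by (simp add: tsubgroup_def)
  have clos: "tadd h g \<in> G" "tneg h \<in> G" if "g \<in> G" for g
    using assms(1) h(1) that by (auto simp: tsubgroup_def)
  have inj: "inj_on (tadd h) G"
    by (rule inj_on_inverseI[of _ "tadd (tneg h)"]) (use tadd_cancel tor in auto)
  have img: "tadd h ` G = G"
  proof
    show "tadd h ` G \<subseteq> G" using clos by auto
    show "G \<subseteq> tadd h ` G"
    proof
      fix g assume g: "g \<in> G"
      have "tadd (tneg h) g \<in> G" using clos(2)[OF g] g assms(1) by (auto simp: tsubgroup_def)
      then show "g \<in> tadd h ` G" using tadd_cancel2[of g h] g tor by (intro rev_image_eqI) auto
    qed
  qed
  define S where "S = (\<Sum>g\<in>G. ee (ip a g))"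
  have "S = (\<Sum>g\<in>G. ee (ip a (tadd h g)))"
    unfolding S_def using sum.reindex[OF inj, of "\<lambda>g. ee (ip a g)"] img by simp
  also have "\<dots> = (\<Sum>g\<in>G. ee (ip a h) * ee (ip a g))"
  proof (intro sum.cong refl)
    fix g assume "g \<in> G"
    have "ee (ip a (tadd h g)) = ee ((ip a h + ip a g) + (ip a (tadd h g) - (ip a h + ip a g)))" by simp
    also have "\<dots> = ee (ip a h + ip a g)" by (rule ee_add_int[OF ip_tadd])
    also have "\<dots> = ee (ip a h) * ee (ip a g)" by (rule ee_add)
    finally show "ee (ip a (tadd h g)) = ee (ip a h) * ee (ip a g)" .
  qed
  also have "\<dots> = ee (ip a h) * S" unfolding S_def by (simp add: sum_distrib_left)
  finally have "S * (1 - ee (ip a h)) = 0" by (simp add: algebra_simps)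
  moreover have "ee (ip a h) \<noteq> 1" using h(2) ee_eq_1 by blast
  ultimately have "S = 0" by simp
  then show ?thesis by (subst if_not_P[OF False]) (simp add: S_def)
qed

definition hk :: "real \<Rightarrow> real" where "hk t = (1 + cos (2 * pi * t)) / 2"

definition cc :: "nat \<Rightarrow> nat \<Rightarrow> real" where "cc M k = real (M choose k) / 2 ^ M"

definition JJ :: "nat \<Rightarrow> ('n::finite \<Rightarrow> nat) set" where
  "JJ M = PiE UNIV (\<lambda>_. {..M})"

definition ipn :: "('n::finite \<Rightarrow> nat) \<Rightarrow> real^'n \<Rightarrow> real" where
  "ipn j y = (\<Sum>i\<in>UNIV. real (j i) * y $ i)"

definition CC :: "nat \<Rightarrow> ('n::finite \<Rightarrow> nat) \<Rightarrow> real" where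
  "CC M j = (\<Prod>i\<in>UNIV. cc M (j i))"

definition QQ :: "nat \<Rightarrow> real^'n \<Rightarrow> complex" where
  "QQ M y = (\<Sum>j\<in>JJ M. of_real (CC M j) * ee (ipn j y))"

lemma hk_bounds: "0 \<le> hk t" "hk t \<le> 1"
proof -
  have a: "-1 \<le> cos (2*pi*t)" by (rule cos_ge_minus_one)
  have b: "cos (2*pi*t) \<le> 1" by (rule cos_le_one)
  have "0 \<le> 1 + cos (2*pi*t)" using a by arith
  then show "0 \<le> hk t" unfolding hk_def by simp
  have "1 + cos (2*pi*t) \<le> 2" using b by arith
  then show "hk t \<le> 1" unfolding hk_def by simp
qed

lemma cc_nonneg: "cc M k \<ge> 0" by (simp add: cc_def)

lemma CC_nonneg: "CC M j \<ge> 0" by (simp add: CC_def cc_nonneg prod_nonneg)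

lemma finite_JJ: "finite (JJ M)" by (simp add: JJ_def finite_PiE)

lemma one_ee_pow: "((1 + ee t) / 2) ^ M = (\<Sum>k\<le>M. of_real (cc M k) * ee (real k * t))"
proof -
  have "(ee t + 1) ^ M = (\<Sum>k\<le>M. of_nat (M choose k) * ee t ^ k * 1 ^ (M - k))"
    by (rule binomial_ring)
  then have "((1 + ee t) / 2) ^ M = (\<Sum>k\<le>M. of_nat (M choose k) * ee t ^ k) / 2 ^ M"
    by (simp add: power_divide add.commute)
  also have "\<dots> = (\<Sum>k\<le>M. of_real (cc M k) * ee (real k * t))"
    by (simp add: sum_divide_distrib cc_def ee_pow)
  finally show ?thesis .
qed

lemma QQ_prod: "QQ M y = (\<Prod>i\<in>UNIV. ((1 + ee (y $ i)) / 2) ^ M)"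
proof -
  have "(\<Prod>i\<in>UNIV. ((1 + ee (y $ i)) / 2) ^ M) = (\<Prod>i\<in>UNIV. \<Sum>k\<in>{..M}. of_real (cc M k) * ee (real k * y $ i))"
    by (simp add: one_ee_pow)
  also have "\<dots> = (\<Sum>j\<in>JJ M. \<Prod>i\<in>UNIV. of_real (cc M (j i)) * ee (real (j i) * y $ i))"
    unfolding JJ_def by (rule prod_sum_PiE) auto
  also have "\<dots> = QQ M y"
    unfolding QQ_def
  proof (intro sum.cong refl)
    fix j :: "'a \<Rightarrow> nat"
    show "(\<Prod>i\<in>UNIV. of_real (cc M (j i)) * ee (real (j i) * y $ i)) = of_real (CC M j) * ee (ipn j y)"
      by (simp add: prod.distrib CC_def ipn_def ee_prod)
  qed
  finally show ?thesis ..
qed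

lemma half_norm: "((1 + ee t) / 2) * cnj ((1 + ee t) / 2) = of_real (hk t)"
proof -
  have "((1 + ee t) / 2) * cnj ((1 + ee t) / 2) = of_real ((Re ((1 + ee t) / 2))\<^sup>2 + (Im ((1 + ee t) / 2))\<^sup>2)"
    by (rule complex_mult_cnj)
  also have "(Re ((1 + ee t) / 2))\<^sup>2 + (Im ((1 + ee t) / 2))\<^sup>2 = hk t"
  proof -
    have "(Re ((1 + ee t) / 2))\<^sup>2 + (Im ((1 + ee t) / 2))\<^sup>2
        = ((1 + cos (2*pi*t)) / 2)\<^sup>2 + (sin (2*pi*t) / 2)\<^sup>2"
      by (simp add: ee_def)
    also have "\<dots> = (1 + 2 * cos (2*pi*t) + ((sin (2*pi*t))\<^sup>2 + (cos (2*pi*t))\<^sup>2)) / 4"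
      by (simp add: power2_eq_square field_simps)
    also have "\<dots> = hk t" by (simp add: hk_def field_simps)
    finally show ?thesis .
  qed
  finally show ?thesis .
qed

lemma QQ_sq: "QQ M y * cnj (QQ M y) = of_real (\<Prod>i\<in>UNIV. hk (y $ i) ^ M)"
proof -
  define z where "z i = (1 + ee (y$i)) / 2" for i
  have "QQ M y = (\<Prod>i\<in>UNIV. z i ^ M)" by (simp add: QQ_prod z_def)
  then have "QQ M y * cnj (QQ M y) = (\<Prod>i\<in>UNIV. z i ^ M) * (\<Prod>i\<in>UNIV. cnj (z i) ^ M)"
    by simp
  also have "\<dots> = (\<Prod>i\<in>UNIV. z i ^ M * cnj (z i) ^ M)" by (rule prod.distrib[symmetric])
  also have "\<dots> = (\<Prod>i\<in>UNIV. (z i * cnj (z i)) ^ M)" by (simp only: power_mult_distrib)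
  also have "\<dots> = (\<Prod>i\<in>UNIV. (of_real (hk (y $ i))) ^ M)" by (simp only: z_def half_norm)
  also have "\<dots> = of_real (\<Prod>i\<in>UNIV. hk (y $ i) ^ M)" by simp
  finally show ?thesis .
qed

definition dd :: "('n \<Rightarrow> nat) \<Rightarrow> ('n \<Rightarrow> nat) \<Rightarrow> ('n \<Rightarrow> int)" where
  "dd j l = (\<lambda>i. int (j i) - int (l i))"

lemma ipn_diff: "ipn j y - ipn l y = ip (dd j l) y"
  by (simp add: ipn_def ip_def dd_def sum_subtractf[symmetric] algebra_simps)

lemma QQ_expand: "QQ M y * cnj (QQ M y) =
   (\<Sum>j\<in>JJ M. \<Sum>l\<in>JJ M. of_real (CC M j * CC M l) * ee (ip (dd j l) y))"
proof -
  have "QQ M y * cnj (QQ M y) = (\<Sum>j\<in>JJ M. of_real (CC M j) * ee (ipn j y)) * (\<Sum>l\<in>JJ M. of_real (CC M l) * ee (- ipn l y))"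
    by (simp add: QQ_def ee_cnj)
  also have "\<dots> = (\<Sum>j\<in>JJ M. \<Sum>l\<in>JJ M. (of_real (CC M j) * ee (ipn j y)) * (of_real (CC M l) * ee (- ipn l y)))"
    by (rule sum_product)
  also have "\<dots> = (\<Sum>j\<in>JJ M. \<Sum>l\<in>JJ M. of_real (CC M j * CC M l) * ee (ip (dd j l) y))"
  proof (intro sum.cong refl)
    fix j l
    have e: "ee (ipn j y) * ee (- ipn l y) = ee (ip (dd j l) y)"
      by (simp add: ee_add[symmetric] ipn_diff[symmetric])
    have "(of_real (CC M j) * ee (ipn j y)) * (of_real (CC M l) * ee (- ipn l y)) = of_real (CC M j * CC M l) * (ee (ipn j y) * ee (- ipn l y))"
      by (simp add: ac_simps)
    then show "(of_real (CC M j) * ee (ipn j y)) * (of_real (CC M l) * ee (- ipn l y)) = of_real (CC M j * CC M l) * ee (ip (dd j l) y)"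
      by (simp only: e)
  qed
  finally show ?thesis .
qed

lemma JJ_le: "j \<in> JJ M \<Longrightarrow> j i \<le> M"
  by (auto simp: JJ_def PiE_iff)

lemma dd_bound: "j \<in> JJ M \<Longrightarrow> l \<in> JJ M \<Longrightarrow> \<bar>dd j l i\<bar> \<le> int M"
  using JJ_le[of j M i] JJ_le[of l M i] by (auto simp: dd_def)

lemma fourier_lower:
  assumes G: "tsubgroup G" "finite G"
    and H: "\<And>a. (\<forall>i. \<bar>a i\<bar> \<le> int M) \<Longrightarrow> (\<forall>g\<in>G. ip a g \<in> \<int>) \<Longrightarrow> ip a p \<in> \<int>"
  shows "real (card G) * (\<Sum>j\<in>(JJ M :: ('n::finite \<Rightarrow> nat) set). (CC M j)^2) \<le> (\<Sum>g\<in>G. \<Prod>i\<in>UNIV. hk ((g - p :: real^'n) $ i) ^ M)"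
proof -
  define ind where "ind j l = (if \<forall>g\<in>G. ip (dd j l) g \<in> \<int> then real (card G) else 0)" for j l
  have inner: "(\<Sum>g\<in>G. of_real (CC M j * CC M l) * ee (ip (dd j l) (g - p))) = of_real (CC M j * CC M l * ind j l)"
    if j: "j \<in> JJ M" and l: "l \<in> JJ M" for j l
  proof -
    have "(\<Sum>g\<in>G. of_real (CC M j * CC M l) * ee (ip (dd j l) (g - p)))
        = (\<Sum>g\<in>G. of_real (CC M j * CC M l) * ee (- ip (dd j l) p) * ee (ip (dd j l) g))"
      by (intro sum.cong refl) (simp add: ip_diff ee_add[symmetric])
    also have "\<dots> = of_real (CC M j * CC M l) * ee (- ip (dd j l) p) * (\<Sum>g\<in>G. ee (ip (dd j l) g))"
      by (simp add: sum_distrib_left)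
    also have "\<dots> = of_real (CC M j * CC M l * ind j l)"
    proof (cases "\<forall>g\<in>G. ip (dd j l) g \<in> \<int>")
      case True
      then have "ip (dd j l) p \<in> \<int>" using H[of "dd j l"] dd_bound[OF j l] by blast
      then have e1: "ee (- ip (dd j l) p) = 1" by (intro ee_int) auto
      have s: "(\<Sum>g\<in>G. ee (ip (dd j l) g)) = of_nat (card G)" using char_sum[OF G] True by simp
      have i: "ind j l = real (card G)" using True by (simp add: ind_def)
      show ?thesis unfolding s i e1 by simp
    next
      case False
      have s: "(\<Sum>g\<in>G. ee (ip (dd j l) g)) = 0"
        by (subst char_sum[OF G]) (simp only: if_not_P[OF False])
      have i: "ind j l = 0" unfolding ind_def by (simp only: if_not_P[OF False])
      show ?thesis unfolding s i by simp
    qed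
    finally show ?thesis .
  qed
  have "complex_of_real (\<Sum>g\<in>G. \<Prod>i\<in>UNIV. hk ((g - p) $ i) ^ M) = (\<Sum>g\<in>G. QQ M (g - p) * cnj (QQ M (g - p)))"
    by (simp add: QQ_sq)
  also have "\<dots> = (\<Sum>g\<in>G. \<Sum>j\<in>JJ M. \<Sum>l\<in>JJ M. of_real (CC M j * CC M l) * ee (ip (dd j l) (g - p)))"
    by (simp add: QQ_expand)
  also have "\<dots> = (\<Sum>j\<in>JJ M. \<Sum>g\<in>G. \<Sum>l\<in>JJ M. of_real (CC M j * CC M l) * ee (ip (dd j l) (g - p)))"
    by (rule sum.swap)
  also have "\<dots> = (\<Sum>j\<in>JJ M. \<Sum>l\<in>JJ M. \<Sum>g\<in>G. of_real (CC M j * CC M l) * ee (ip (dd j l) (g - p)))"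
    by (intro sum.cong refl sum.swap)
  also have "\<dots> = (\<Sum>j\<in>JJ M. \<Sum>l\<in>JJ M. of_real (CC M j * CC M l * ind j l))"
    by (intro sum.cong refl inner)
  also have "\<dots> = complex_of_real (\<Sum>j\<in>JJ M. \<Sum>l\<in>JJ M. CC M j * CC M l * ind j l)"
    by simp
  finally have eq: "(\<Sum>g\<in>G. \<Prod>i\<in>UNIV. hk ((g - p) $ i) ^ M) = (\<Sum>j\<in>JJ M. \<Sum>l\<in>JJ M. CC M j * CC M l * ind j l)"
    using of_real_eq_iff by blast
  have indj: "ind j j = real (card G)" for j
    by (simp add: ind_def dd_def ip_0a[unfolded zero_fun_def])
  have "real (card G) * (\<Sum>j\<in>(JJ M :: ('n \<Rightarrow> nat) set). (CC M j)^2) = (\<Sum>j\<in>JJ M. CC M j * CC M j * ind j j)"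
    by (simp add: indj sum_distrib_left power2_eq_square algebra_simps)
  also have "\<dots> \<le> (\<Sum>j\<in>JJ M. \<Sum>l\<in>JJ M. CC M j * CC M l * ind j l)"
  proof (intro sum_mono)
    fix j :: "'n \<Rightarrow> nat" assume j: "j \<in> JJ M"
    show "CC M j * CC M j * ind j j \<le> (\<Sum>l\<in>JJ M. CC M j * CC M l * ind j l)"
      by (rule member_le_sum[where f="\<lambda>l. CC M j * CC M l * ind j l", OF j])
         (auto simp: finite_JJ CC_nonneg ind_def)
  qed
  finally show ?thesis using eq by simp
qed

lemma sum_cc: "(\<Sum>k\<le>M. cc M k) = 1"
  by (simp add: cc_def sum_divide_distrib[symmetric] of_nat_sum[symmetric] choose_row_sum)

lemma sum_cc_sq: "(\<Sum>k\<le>M. (cc M k)^2) \<ge> 1 / (real M + 1)"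
proof -
  have "(\<Sum>k\<le>M. cc M k * 1)\<^sup>2 \<le> (\<Sum>k\<le>M. (cc M k)\<^sup>2) * (\<Sum>k\<le>M. (1::real)\<^sup>2)"
    by (rule Cauchy_Schwarz_ineq_sum)
  moreover have "(\<Sum>k\<le>M. (1::real)\<^sup>2) = real M + 1" by simp
  ultimately have "1 \<le> (\<Sum>k\<le>M. (cc M k)\<^sup>2) * (real M + 1)" by (simp only: sum_cc mult_1_right) simp
  then show ?thesis by (simp add: field_simps)
qed

lemma sum_CC_sq: "(\<Sum>j\<in>(JJ M :: ('n::finite \<Rightarrow> nat) set). (CC M j)^2) = (\<Sum>k\<le>M. (cc M k)^2) ^ CARD('n)"
proof -
  have "(\<Sum>k\<le>M. (cc M k)^2) ^ CARD('n) = (\<Prod>i\<in>(UNIV::'n set). \<Sum>k\<in>{..M}. (cc M k)^2)"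
    by simp
  also have "\<dots> = (\<Sum>j\<in>(JJ M :: ('n \<Rightarrow> nat) set). \<Prod>i\<in>UNIV. (cc M (j i))^2)"
    unfolding JJ_def by (rule prod_sum_PiE[where f="\<lambda>i k. (cc M k)^2" and A=UNIV and B="\<lambda>_. {..M}"]) auto
  also have "\<dots> = (\<Sum>j\<in>(JJ M :: ('n \<Rightarrow> nat) set). (CC M j)^2)"
    by (simp add: CC_def prod_power_distrib)
  finally show ?thesis ..
qed

lemma sum_CC_sq_ge: "(\<Sum>j\<in>(JJ M :: ('n::finite \<Rightarrow> nat) set). (CC M j)^2) \<ge> (1 / (real M + 1)) ^ CARD('n)"
  unfolding sum_CC_sq by (rule power_mono[OF sum_cc_sq]) simp

lemma prod_le_member:
  assumes "finite A" "i0 \<in> A" "\<And>i. i \<in> A \<Longrightarrow> 0 \<le> f i \<and> f i \<le> (1::real)"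
  shows "prod f A \<le> f i0"
proof -
  have "prod f A = f i0 * prod f (A - {i0})" using assms(1,2) by (rule prod.remove)
  also have "\<dots> \<le> f i0 * 1"
    using assms by (intro mult_left_mono prod_le_1) auto
  finally show ?thesis by simp
qed

lemma lemmaD:
  assumes "\<eta> < 1"
  shows "\<exists>M. \<forall>p G. tsubgroup G \<longrightarrow> finite G \<longrightarrow> (\<forall>g\<in>G. \<exists>i. hk (g $ i - p $ i) \<le> \<eta>) \<longrightarrow>
           (\<exists>a :: ('n::finite) \<Rightarrow> int. (\<forall>i. \<bar>a i\<bar> \<le> int M) \<and> (\<forall>g\<in>G. ip a g \<in> \<int>) \<and> ip a p \<notin> \<int>)"
proof -
  define \<eta>' where "\<eta>' = max \<eta> (1/2)"
  have e: "0 < \<eta>'" "\<eta>' < 1" "\<eta> \<le> \<eta>'" using assms by (auto simp: \<eta>'_def)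
  have "(\<lambda>M. (real M + 1) ^ CARD('n) * \<eta>' ^ M) \<longlonglongrightarrow> 0"
    using e(1,2) by real_asymp
  then have "eventually (\<lambda>M. (real M + 1) ^ CARD('n) * \<eta>' ^ M < 1) sequentially"
    by (rule order_tendstoD) simp
  then obtain M where M: "(real M + 1) ^ CARD('n) * \<eta>' ^ M < 1"
    by (auto simp: eventually_sequentially)
  show ?thesis
  proof (intro exI[of _ M] allI impI)
    fix p :: "real^'n" and G
    assume G: "tsubgroup G" "finite G" and far: "\<forall>g\<in>G. \<exists>i. hk (g $ i - p $ i) \<le> \<eta>"
    show "\<exists>a::'n\<Rightarrow>int. (\<forall>i. \<bar>a i\<bar> \<le> int M) \<and> (\<forall>g\<in>G. ip a g \<in> \<int>) \<and> ip a p \<notin> \<int>"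
    proof (rule ccontr)
      assume "\<not> ?thesis"
      then have H: "\<And>a. (\<forall>i. \<bar>a i\<bar> \<le> int M) \<Longrightarrow> (\<forall>g\<in>G. ip a g \<in> \<int>) \<Longrightarrow> ip a p \<in> \<int>" by blast
      have "0 \<in> G" using G by (simp add: tsubgroup_def)
      then have cpos: "real (card G) > 0" using G(2) card_gt_0_iff by auto
      have "(1 / (real M + 1)) ^ CARD('n) \<le> (\<Sum>j\<in>(JJ M :: ('n \<Rightarrow> nat) set). (CC M j)^2)"
        by (rule sum_CC_sq_ge)
      then have "real (card G) * (1 / (real M + 1)) ^ CARD('n) \<le> real (card G) * (\<Sum>j\<in>(JJ M :: ('n \<Rightarrow> nat) set). (CC M j)^2)"
        using cpos by simp
      also have "\<dots> \<le> (\<Sum>g\<in>G. \<Prod>i\<in>UNIV. hk ((g - p) $ i) ^ M)"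
        by (rule fourier_lower[OF G H])
      also have "\<dots> \<le> (\<Sum>g\<in>G. \<eta>' ^ M)"
      proof (intro sum_mono)
        fix g assume "g \<in> G"
        then obtain i0 where i0: "hk (g $ i0 - p $ i0) \<le> \<eta>" using far by blast
        have "(\<Prod>i\<in>UNIV. hk ((g - p) $ i) ^ M) \<le> hk ((g - p) $ i0) ^ M"
          by (rule prod_le_member) (auto simp: hk_bounds power_le_one)
        also have "\<dots> \<le> \<eta>' ^ M"
          using i0 e(3) hk_bounds by (intro power_mono) auto
        finally show "(\<Prod>i\<in>UNIV. hk ((g - p) $ i) ^ M) \<le> \<eta>' ^ M" .
      qed
      also have "\<dots> = real (card G) * \<eta>' ^ M" by simp
      finally have "(1 / (real M + 1)) ^ CARD('n) \<le> \<eta>' ^ M" using cpos by simp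
      then have "1 \<le> (real M + 1) ^ CARD('n) * \<eta>' ^ M"
        by (simp add: power_divide field_simps)
      then show False using M by simp
    qed
  qed
qed

definition thin :: "(real^'n \<Rightarrow> bool) \<Rightarrow> (real^'n::finite) set \<Rightarrow> bool" where
  "thin bad V \<longleftrightarrow> (\<forall>x\<in>V. bad x \<longrightarrow> (\<exists>i. (\<exists>y\<in>V. y$i \<noteq> 0) \<and> x$i = 0))"

definition fat :: "(real^'n \<Rightarrow> bool) \<Rightarrow> (real^'n::finite) set \<Rightarrow> bool" where
  "fat bad V \<longleftrightarrow> (\<exists>p\<in>V. \<exists>\<eta><1. \<forall>x\<in>V. (\<forall>i. hk (x$i - p$i) > \<eta>) \<longrightarrow> bad x)"

definition ev :: "'n \<Rightarrow> ('n \<Rightarrow> int)" where "ev i = (\<lambda>k. if k = i then 1 else 0)"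

lemma ip_ev: "ip (ev i) x = x $ i"
proof -
  have "ip (ev i) x = (\<Sum>k\<in>UNIV. if k = i then x $ k else 0)"
    unfolding ip_def ev_def by (intro sum.cong refl) auto
  also have "\<dots> = x $ i" by simp
  finally show ?thesis .
qed

lemma torus_nth: "x \<in> torus \<Longrightarrow> 0 \<le> x $ i \<and> x $ i < 1"
  by (simp add: torus_def)

lemma torus_Ints: "x \<in> torus \<Longrightarrow> x $ i \<in> \<int> \<longleftrightarrow> x $ i = 0"
proof
  assume x: "x \<in> torus" and "x $ i \<in> \<int>"
  then obtain k where k: "x $ i = of_int k" by (auto elim: Ints_cases)
  have "0 \<le> x $ i" "x $ i < 1" using torus_nth[OF x] by auto
  then have "0 \<le> k" "k < 1" using k by simp_all
  then have "k = 0" by arith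
  then show "x $ i = 0" using k by simp
qed simp

lemma Aset_insert: "Aset (insert a S) = Aset S \<inter> {x. ip a x \<in> \<int>}"
  by (auto simp: Aset_def)

lemma finite_box: "finite {a :: 'n::finite \<Rightarrow> int. \<forall>i. \<bar>a i\<bar> \<le> int M}"
proof -
  have "{a :: 'n \<Rightarrow> int. \<forall>i. \<bar>a i\<bar> \<le> int M} \<subseteq> PiE UNIV (\<lambda>_. {- int M..int M})"
  proof
    fix a :: "'n \<Rightarrow> int" assume "a \<in> {a. \<forall>i. \<bar>a i\<bar> \<le> int M}"
    then have h: "\<bar>a i\<bar> \<le> int M" for i by auto
    have "a i \<in> {- int M..int M}" for i using h[of i] by (auto simp: abs_le_iff)
    then show "a \<in> PiE UNIV (\<lambda>_. {- int M..int M})" by (simp add: PiE_UNIV_domain)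
  qed
  moreover have "finite (PiE (UNIV::'n set) (\<lambda>_. {- int M..int M}))" by (intro finite_PiE) auto
  ultimately show ?thesis by (rule finite_subset)
qed

lemma main_induct:
  assumes dich: "\<And>S. thin bad (Aset S) \<or> fat bad (Aset S)"
  shows "\<exists>Ss. Char bad (Aset S :: (real^'n::finite) set) Ss"
proof (induction S rule: wf_induct[OF wf_Aset])
  case (1 S)
  define V where "V = (Aset S :: (real^'n) set)"
  have IH: "\<And>S'. Aset S' \<subset> V \<Longrightarrow> \<exists>Ss. Char bad (Aset S') Ss" using 1 V_def by auto
  have Vt: "V \<subseteq> torus" unfolding V_def by (rule Aset_sub_torus)
  from dich[of S] show ?case
  proof
    assume th: "thin bad (Aset S)"
    define I where "I = {i. \<exists>y\<in>V. y$i \<noteq> 0}"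
    define Vi where "Vi i = Aset (insert (ev i) S)" for i
    have sub: "closed_tsubgroup (Vi i) \<and> Vi i \<subset> V" if iI: "i \<in> I" for i
    proof -
      obtain y where y: "y \<in> V" "y $ i \<noteq> 0" using iI I_def by auto
      have "y \<notin> Vi i" using y Vt torus_Ints[of y i] by (auto simp: Vi_def Aset_insert ip_ev)
      moreover have "closed_tsubgroup (Vi i)" unfolding Vi_def by (rule closed_Aset)
      moreover have "Vi i \<subseteq> V" by (auto simp: Vi_def V_def Aset_insert)
      ultimately show ?thesis using y by blast
    qed
    have "\<exists>Ss. Char bad (Vi i) Ss" if iI: "i \<in> I" for i
    proof -
      have "Aset (insert (ev i) S) \<subset> V" using sub[OF iI] unfolding Vi_def by blast
      then show ?thesis unfolding Vi_def by (rule IH)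
    qed
    then have "\<forall>i\<in>I. \<exists>Ss. Char bad (Vi i) Ss" by blast
    from bchoice[OF this] obtain Ss where Ss0: "\<forall>i\<in>I. Char bad (Vi i) (Ss i)" ..
    then have Ss: "\<And>i. i \<in> I \<Longrightarrow> Char bad (Vi i) (Ss i)" by blast
    have eqv: "good bad G \<longleftrightarrow> (\<forall>i\<in>I. good bad (G \<inter> Vi i))" if G: "qf_toric G" "G \<subseteq> V" for G
    proof
      assume "good bad G" then show "\<forall>i\<in>I. good bad (G \<inter> Vi i)" by (auto simp: good_def)
    next
      assume gi: "\<forall>i\<in>I. good bad (G \<inter> Vi i)"
      show "good bad G" unfolding good_def
      proof
        fix g assume g: "g \<in> G"
        show "\<not> bad g"
        proof
          assume b: "bad g"
          then obtain i where i: "\<exists>y\<in>V. y$i \<noteq> 0" "g $ i = 0" using th g G(2) V_def unfolding thin_def by blast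
          have "g \<in> Vi i" using g G(2) i(2) by (auto simp: Vi_def Aset_insert ip_ev V_def)
          then show False using gi i(1) g b by (auto simp: good_def I_def)
        qed
      qed
    qed
    have cV: "closed_tsubgroup V" unfolding V_def by (rule closed_Aset)
    have fI: "finite I" by simp
    have "\<exists>Ss'. Char bad V Ss'"
      by (rule Char_thin[of V I Vi bad Ss, OF cV fI sub Ss eqv])
    then show ?thesis unfolding V_def .
  next
    assume "fat bad (Aset S)"
    then obtain p \<eta> where p: "p \<in> V" "\<eta> < 1" and reg: "\<forall>x\<in>V. (\<forall>i. hk (x$i - p$i) > \<eta>) \<longrightarrow> bad x"
      unfolding fat_def V_def by blast
    obtain M where M: "\<forall>p G. tsubgroup G \<longrightarrow> finite G \<longrightarrow> (\<forall>g\<in>G. \<exists>i. hk (g $ i - p $ i) \<le> \<eta>) \<longrightarrow>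
           (\<exists>a :: 'n \<Rightarrow> int. (\<forall>i. \<bar>a i\<bar> \<le> int M) \<and> (\<forall>g\<in>G. ip a g \<in> \<int>) \<and> ip a p \<notin> \<int>)"
      using lemmaD[OF p(2)] by blast
    define K where "K = {a :: 'n \<Rightarrow> int. (\<forall>i. \<bar>a i\<bar> \<le> int M) \<and> ip a p \<notin> \<int>}"
    define W where "W a = Aset (insert a S)" for a
    have finK: "finite K" unfolding K_def by (rule finite_subset[OF _ finite_box]) auto
    have Wsub: "W a \<subset> V" if "a \<in> K" for a
      using that p(1) by (auto simp: W_def K_def Aset_insert V_def)
    have "\<exists>Ss. Char bad (W a) Ss" if aK: "a \<in> K" for a
    proof -
      have "Aset (insert a S) \<subset> V" using Wsub[OF aK] unfolding W_def by blast
      then show ?thesis unfolding W_def by (rule IH)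
    qed
    then have "\<forall>a\<in>K. \<exists>Ss. Char bad (W a) Ss" by blast
    from bchoice[OF this] obtain Ss where Ss0: "\<forall>a\<in>K. Char bad (W a) (Ss a)" ..
    then have Ss: "\<And>a. a \<in> K \<Longrightarrow> Char bad (W a) (Ss a)" by blast
    have cover: "\<exists>a\<in>K. G \<subseteq> W a" if G: "qf_toric G" "G \<subseteq> V" "good bad G" for G
    proof -
      have "\<forall>g\<in>G. \<exists>i. hk (g $ i - p $ i) \<le> \<eta>"
      proof
        fix g assume g: "g \<in> G"
        show "\<exists>i. hk (g $ i - p $ i) \<le> \<eta>"
        proof (rule ccontr)
          assume "\<not> (\<exists>i. hk (g $ i - p $ i) \<le> \<eta>)"
          then have "\<forall>i. hk (g $ i - p $ i) > \<eta>" by (simp add: not_le)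
          moreover have "g \<in> V" using g G(2) by blast
          ultimately have "bad g" using reg by blast
          then show False using G(3) g unfolding good_def by blast
        qed
      qed
      then obtain a where a: "\<forall>i. \<bar>a i\<bar> \<le> int M" "\<forall>g\<in>G. ip a g \<in> \<int>" "ip a p \<notin> \<int>"
        using M G(1) unfolding qf_toric_def by blast
      have "a \<in> K" using a K_def by auto
      moreover have "G \<subseteq> W a" using a(2) G(2) by (auto simp: W_def Aset_insert V_def)
      ultimately show ?thesis by blast
    qed
    have "Char bad V (\<Union>a\<in>K. Ss a)"
      by (rule Char_union[OF finK Ss]) (use Wsub cover in blast)+
    then show ?thesis unfolding V_def by blast
  qed
qed

definition bad_gt :: "real \<Rightarrow> real^'n::finite \<Rightarrow> bool" where
  "bad_gt \<epsilon> x \<longleftrightarrow> x \<noteq> 0 \<and> (\<Sum>i\<in>UNIV. x$i) \<le> \<epsilon>"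

definition bad_ge :: "real \<Rightarrow> real^'n::finite \<Rightarrow> bool" where
  "bad_ge \<epsilon> x \<longleftrightarrow> x \<noteq> 0 \<and> (\<Sum>i\<in>UNIV. x$i) < \<epsilon>"

lemma hk_lt1: assumes "0 < \<delta>" "\<delta> < 1/2" shows "hk \<delta> < 1"
proof -
  have "cos (2*pi*\<delta>) < cos 0" using assms by (intro cos_monotone_0_pi) auto
  then show ?thesis by (simp add: hk_def)
qed

lemma hk_close_raw:
  assumes "0 < \<delta>" "\<delta> \<le> 1/2" "-1 < t" "t < 1" "hk t > hk \<delta>"
  shows "\<bar>t\<bar> < \<delta> \<or> \<bar>t\<bar> > 1 - \<delta>"
proof -
  define u where "u = \<bar>t\<bar>"
  have u: "0 \<le> u" "u < 1" using assms(3,4) by (auto simp: u_def)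
  have "cos (2*pi*t) = cos (2*pi*u)"
    by (cases "t \<ge> 0") (auto simp: u_def)
  then have c: "cos (2*pi*\<delta>) < cos (2*pi*u)" using assms(5) by (simp add: hk_def)
  show ?thesis
  proof (cases "u \<le> 1/2")
    case True
    have "2*pi*u < 2*pi*\<delta>"
      using c True u assms(1,2) by (subst (asm) cos_mono_less_eq) auto
    then have "u < \<delta>" by simp
    then show ?thesis by (simp add: u_def)
  next
    case False
    have "cos (2*pi*u) = cos (2*pi - 2*pi*(1 - u))" by (simp add: algebra_simps)
    also have "\<dots> = cos (2*pi*(1-u))" by (rule cos_2pi_minus)
    finally have "cos (2*pi*\<delta>) < cos (2*pi*(1-u))" using c by simp
    then have "2*pi*(1-u) < 2*pi*\<delta>"
      using False u assms(1,2) by (subst (asm) cos_mono_less_eq) auto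
    then have "1 - u < \<delta>" by simp
    then show ?thesis by (simp add: u_def)
  qed
qed

lemma hk_close:
  assumes "0 < \<delta>" "\<delta> \<le> d" "d < c" "c < 1 - d" "0 \<le> x" "x < 1" "hk (x - c) > hk \<delta>"
  shows "\<bar>x - c\<bar> < \<delta>"
proof -
  have "\<bar>x - c\<bar> < \<delta> \<or> \<bar>x - c\<bar> > 1 - \<delta>"
    using assms by (intro hk_close_raw) auto
  moreover have "\<not> \<bar>x - c\<bar> > 1 - \<delta>" using assms by (auto simp: abs_if)
  ultimately show ?thesis by blast
qed

lemma Aset_zero_coord: "x \<in> Aset S \<Longrightarrow> \<not> (\<exists>y\<in>Aset S. y$i \<noteq> 0) \<Longrightarrow> x$i = 0"
  by auto

lemma fat_from:
  assumes p: "p \<in> Aset S" and "0 < \<delta>" "\<delta> \<le> d"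
    and pd: "\<forall>i. (\<exists>y\<in>Aset S. y$i \<noteq> 0) \<longrightarrow> d < p$i \<and> p$i < 1 - d"
    and reg: "\<forall>x\<in>Aset S. (\<forall>i. \<bar>x$i - p$i\<bar> < \<delta>) \<longrightarrow> bad x"
    and ne: "\<exists>i. \<exists>y\<in>Aset S. y$i \<noteq> 0"
  shows "fat bad (Aset S)"
  unfolding fat_def
proof (intro bexI[OF _ p] exI[of _ "hk \<delta>"] conjI ballI impI)
  obtain i0 where "\<exists>y\<in>Aset S. y$i0 \<noteq> 0" using ne by blast
  then have "d < 1/2" using pd by force
  then show "hk \<delta> < 1" using assms(2,3) by (intro hk_lt1) auto
  fix x assume x: "x \<in> Aset S" and h: "\<forall>i. hk \<delta> < hk (x $ i - p $ i)"
  have "\<bar>x$i - p$i\<bar> < \<delta>" for i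
  proof (cases "\<exists>y\<in>Aset S. y$i \<noteq> 0")
    case True
    have xt: "0 \<le> x$i" "x$i < 1" using x Aset_sub_torus torus_nth by blast+
    show ?thesis using pd True assms(2,3) xt h by (intro hk_close[of \<delta> d]) auto
  next
    case False
    then show ?thesis using Aset_zero_coord[OF x False] Aset_zero_coord[OF p False] assms(2) by simp
  qed
  then show "bad x" using reg x by blast
qed

lemma fat_lt:
  assumes p: "p \<in> Aset S" and d: "0 < d"
    and pd: "\<forall>i. (\<exists>y\<in>Aset S. y$i \<noteq> 0) \<longrightarrow> d < p$i \<and> p$i < 1 - d"
    and ne: "\<exists>i. \<exists>y\<in>Aset S. y$i \<noteq> 0"
    and sp: "(\<Sum>i\<in>UNIV. p$i) < \<epsilon>"
    and bd: "\<And>x. x \<noteq> 0 \<Longrightarrow> (\<Sum>i\<in>UNIV. x$i) < \<epsilon> \<Longrightarrow> bad x"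
  shows "fat bad (Aset (S :: ('n::finite \<Rightarrow> int) set))"
proof -
  define \<delta> where "\<delta> = min d ((\<epsilon> - (\<Sum>i\<in>UNIV. p$i)) / (real CARD('n) + 1))"
  have dp: "0 < \<delta>" "\<delta> \<le> d" using d sp by (auto simp: \<delta>_def)
  show ?thesis
  proof (rule fat_from[OF p dp pd _ ne], intro ballI impI)
    fix x assume x: "x \<in> Aset S" and cl: "\<forall>i. \<bar>x$i - p$i\<bar> < \<delta>"
    have "(\<Sum>i\<in>UNIV. x$i) - (\<Sum>i\<in>UNIV. p$i) = (\<Sum>i\<in>UNIV. x$i - p$i)" by (simp add: sum_subtractf)
    also have "\<dots> \<le> (\<Sum>i\<in>UNIV. \<bar>x$i - p$i\<bar>)" by (intro sum_mono) auto
    also have "\<dots> < (\<Sum>i\<in>(UNIV::'n set). \<delta>)" using cl by (intro sum_strict_mono) auto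
    also have "\<dots> = real CARD('n) * \<delta>" by simp
    also have "\<dots> \<le> real CARD('n) * ((\<epsilon> - (\<Sum>i\<in>UNIV. p$i)) / (real CARD('n) + 1))"
      by (intro mult_left_mono) (auto simp: \<delta>_def)
    also have "\<dots> < \<epsilon> - (\<Sum>i\<in>UNIV. p$i)"
    proof -
      have "real CARD('n) / (real CARD('n) + 1) < 1" by simp
      then show ?thesis using sp by (simp add: field_simps)
    qed
    finally have s: "(\<Sum>i\<in>UNIV. x$i) < \<epsilon>" by simp
    obtain i0 where i0: "\<exists>y\<in>Aset S. y$i0 \<noteq> 0" using ne by blast
    have "x$i0 > 0" using cl[rule_format, of i0] pd i0 dp by auto
    then have "x \<noteq> 0" by auto
    then show "bad x" using bd s by blast
  qed
qed

lemma pos_lower: "finite A \<Longrightarrow> (\<forall>i\<in>A. 0 < f i) \<Longrightarrow> \<exists>d>0. \<forall>i\<in>A. d < (f i :: real)"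
proof (induction A rule: finite_induct)
  case empty then show ?case by (intro exI[of _ 1]) auto
next
  case (insert x F)
  then obtain d where "d > 0" "\<forall>i\<in>F. d < f i" by auto
  then show ?case using insert(4) by (intro exI[of _ "min d (f x / 2)"]) auto
qed

lemma not_thin_point:
  assumes "\<not> thin bad (Aset S)" and bnz: "\<And>b. bad b \<Longrightarrow> b \<noteq> 0"
  obtains b d where "b \<in> Aset S" "bad b" "0 < d" "\<forall>i. (\<exists>y\<in>Aset S. y$i \<noteq> 0) \<longrightarrow> d < b$i \<and> b$i < 1 - d"
     "\<exists>i. \<exists>y\<in>Aset S. y$i \<noteq> 0"
proof -
  obtain b where b: "b \<in> Aset S" "bad b" "\<forall>i. (\<exists>y\<in>Aset S. y$i \<noteq> 0) \<longrightarrow> b$i \<noteq> 0"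
    using assms(1) unfolding thin_def by blast
  define I where "I = {i. \<exists>y\<in>Aset S. y$i \<noteq> 0}"
  have bt: "0 \<le> b$i" "b$i < 1" for i using b(1) Aset_sub_torus torus_nth by blast+
  have "\<forall>i\<in>I. 0 < min (b$i) (1 - b$i)"
  proof
    fix i assume "i \<in> I"
    then have "b$i \<noteq> 0" using b(3) unfolding I_def by blast
    then show "0 < min (b$i) (1 - b$i)" using bt[of i] by auto
  qed
  moreover have fI: "finite I" by simp
  ultimately obtain d where d: "d > 0" "\<forall>i\<in>I. d < min (b$i) (1 - b$i)"
    using pos_lower[of I "\<lambda>i. min (b$i) (1 - b$i)"] by blast
  have "b \<noteq> 0" using bnz b(2) by blast
  then obtain i where "b$i \<noteq> 0" by (auto simp: vec_eq_iff)
  then have "\<exists>i. \<exists>y\<in>Aset S. y$i \<noteq> 0" using b(1) by blast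
  moreover have "\<forall>i. (\<exists>y\<in>Aset S. y$i \<noteq> 0) \<longrightarrow> d < b$i \<and> b$i < 1 - d"
    using d(2) unfolding I_def by auto
  ultimately show ?thesis using that b(1,2) d(1) by blast
qed

lemma dich_ge: "thin (bad_ge \<epsilon>) (Aset S) \<or> fat (bad_ge \<epsilon>) (Aset (S :: ('n::finite \<Rightarrow> int) set))"
proof (cases "thin (bad_ge \<epsilon>) (Aset S)")
  case True then show ?thesis by blast
next
  case False
  then have "\<not> thin (bad_ge \<epsilon>) (Aset S)" .
  then obtain b d where b: "b \<in> Aset S" "bad_ge \<epsilon> b" "0 < d"
    "\<forall>i. (\<exists>y\<in>Aset S. y$i \<noteq> 0) \<longrightarrow> d < b$i \<and> b$i < 1 - d" "\<exists>i. \<exists>y\<in>Aset S. y$i \<noteq> 0"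
    by (rule not_thin_point) (auto simp: bad_ge_def)
  have sb: "(\<Sum>i\<in>UNIV. b$i) < \<epsilon>" using b(2) by (simp add: bad_ge_def)
  have bge: "\<And>x :: real^'n. x \<noteq> 0 \<Longrightarrow> (\<Sum>i\<in>UNIV. x$i) < \<epsilon> \<Longrightarrow> bad_ge \<epsilon> x" by (simp add: bad_ge_def)
  have "fat (bad_ge \<epsilon>) (Aset S)"
    using fat_lt[OF b(1,3,4,5) sb bge] .
  then show ?thesis by blast
qed

lemma Aset_tproj: "x \<in> Aset S \<Longrightarrow> y \<in> Aset S \<Longrightarrow> tproj (x + x - y) \<in> Aset S"
proof -
  assume x: "x \<in> Aset S" and y: "y \<in> Aset S"
  have "ip a (x + x - y) = ip a x + ip a x - ip a y" for a by (simp only: ip_add ip_diff)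
  then show ?thesis using x y by (auto simp: Aset_def tproj_in_torus ip_tproj_Ints)
qed

lemma dich_gt: "thin (bad_gt \<epsilon>) (Aset S) \<or> fat (bad_gt \<epsilon>) (Aset (S :: ('n::finite \<Rightarrow> int) set))"
proof (cases "thin (bad_gt \<epsilon>) (Aset S)")
  case True then show ?thesis by blast
next
  case False
  then have "\<not> thin (bad_gt \<epsilon>) (Aset S)" .
  then obtain b d where b: "b \<in> Aset S" "bad_gt \<epsilon> b" "0 < d"
    and bd: "\<forall>i. (\<exists>y\<in>Aset S. y$i \<noteq> 0) \<longrightarrow> d < b$i \<and> b$i < 1 - d" and ne: "\<exists>i. \<exists>y\<in>Aset S. y$i \<noteq> 0"
    by (rule not_thin_point) (auto simp: bad_gt_def)
  have bgt: "\<And>x :: real^'n. x \<noteq> 0 \<Longrightarrow> (\<Sum>i\<in>UNIV. x$i) < \<epsilon> \<Longrightarrow> bad_gt \<epsilon> x" by (auto simp: bad_gt_def)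
  have "fat (bad_gt \<epsilon>) (Aset S)"
  proof (cases "(\<Sum>i\<in>UNIV. b$i) < \<epsilon>")
    case True
    show ?thesis by (rule fat_lt[OF b(1,3) bd ne True bgt])
  next
    case False
    then have sb: "(\<Sum>i\<in>UNIV. b$i) = \<epsilon>" using b(2) by (auto simp: bad_gt_def)
    show ?thesis
    proof (cases "\<forall>x\<in>Aset S. (\<forall>i. \<bar>x$i - b$i\<bar> < d/2) \<longrightarrow> (\<Sum>i\<in>UNIV. x$i) \<le> \<epsilon>")
      case True
      show ?thesis
      proof (rule fat_from[OF b(1) _ _ bd _ ne])
        show "0 < d/2" "d/2 \<le> d" using b(3) by auto
        show "\<forall>x\<in>Aset S. (\<forall>i. \<bar>x $ i - b $ i\<bar> < d / 2) \<longrightarrow> bad_gt \<epsilon> x"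
        proof (intro ballI impI)
          fix x assume x: "x \<in> Aset S" and cl: "\<forall>i. \<bar>x $ i - b $ i\<bar> < d / 2"
          obtain i0 where i0: "\<exists>y\<in>Aset S. y$i0 \<noteq> 0" using ne by blast
          have "d < b$i0" using bd i0 by blast
          moreover have "\<bar>x$i0 - b$i0\<bar> < d/2" using cl by blast
          moreover have "- (x$i0 - b$i0) \<le> \<bar>x$i0 - b$i0\<bar>" by (rule abs_ge_minus_self)
          ultimately have "x$i0 > 0" using b(3) by linarith
          then have "x \<noteq> 0" by auto
          then show "bad_gt \<epsilon> x" using True x cl by (auto simp: bad_gt_def)
        qed
      qed
    next
      case False
      then obtain x where x: "x \<in> Aset S" "\<forall>i. \<bar>x$i - b$i\<bar> < d/2" "(\<Sum>i\<in>UNIV. x$i) > \<epsilon>"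
        by (auto simp: not_le)
      define p where "p = tproj (b + b - x)"
      have pV: "p \<in> Aset S" unfolding p_def by (rule Aset_tproj[OF b(1) x(1)])
      have pi: "p$i = 2 * b$i - x$i" for i
      proof (cases "\<exists>y\<in>Aset S. y$i \<noteq> 0")
        case True
        then have "d < b$i" "b$i < 1 - d" using bd by auto
        moreover have "\<bar>x$i - b$i\<bar> < d/2" using x(2) by blast
        moreover have "- (x$i - b$i) \<le> \<bar>x$i - b$i\<bar>" "x$i - b$i \<le> \<bar>x$i - b$i\<bar>" by auto
        ultimately have "0 \<le> b$i + b$i - x$i" "b$i + b$i - x$i < 1" using b(3) by linarith+
        then show ?thesis by (simp add: p_def tproj_nth frac_eq)
      next
        case False
        then show ?thesis using Aset_zero_coord[OF x(1) False] Aset_zero_coord[OF b(1) False]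
          by (simp add: p_def tproj_nth)
      qed
      have sp: "(\<Sum>i\<in>UNIV. p$i) < \<epsilon>"
      proof -
        have "(\<Sum>i\<in>UNIV. p$i) = 2 * (\<Sum>i\<in>UNIV. b$i) - (\<Sum>i\<in>UNIV. x$i)"
          by (simp add: pi sum_subtractf sum_distrib_left)
        then show ?thesis using sb x(3) by simp
      qed
      have pd: "\<forall>i. (\<exists>y\<in>Aset S. y$i \<noteq> 0) \<longrightarrow> d/2 < p$i \<and> p$i < 1 - d/2"
      proof (intro allI impI)
        fix i assume "\<exists>y\<in>Aset S. y$i \<noteq> 0"
        then have "d < b$i" "b$i < 1 - d" using bd by auto
        moreover have "\<bar>x$i - b$i\<bar> < d/2" using x(2) by blast
        moreover have "- (x$i - b$i) \<le> \<bar>x$i - b$i\<bar>" "x$i - b$i \<le> \<bar>x$i - b$i\<bar>" by auto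
        ultimately show "d/2 < p$i \<and> p$i < 1 - d/2" using pi[of i] by linarith
      qed
      have "0 < d/2" using b(3) by simp
      show ?thesis by (rule fat_lt[OF pV \<open>0 < d/2\<close> pd ne sp bgt])
    qed
  qed
  then show ?thesis by blast
qed

lemma mld_ge: "mld G \<ge> ereal \<epsilon> \<longleftrightarrow> good (bad_ge \<epsilon>) G"
  unfolding mld_def good_def bad_ge_def by (auto simp: le_Inf_iff not_less)

lemma mld_gt:
  assumes "finite G"
  shows "mld G > ereal \<epsilon> \<longleftrightarrow> good (bad_gt \<epsilon>) G"
proof -
  define X where "X = {ereal (\<Sum>i\<in>UNIV. g $ i) | g. g \<in> G \<and> g \<noteq> 0}"
  have fX: "finite X" unfolding X_def using assms by auto
  have "Inf X > ereal \<epsilon> \<longleftrightarrow> (\<forall>x\<in>X. x > ereal \<epsilon>)"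
  proof (cases "X = {}")
    case True then show ?thesis by (simp add: top_ereal_def)
  next
    case False
    have "Inf X = Min X" using fX False by (rule cInf_eq_Min)
    then show ?thesis using fX False by simp
  qed
  also have "\<dots> \<longleftrightarrow> good (bad_gt \<epsilon>) G"
    unfolding X_def good_def bad_gt_def by (auto simp: not_le)
  finally show ?thesis unfolding mld_def X_def .
qed

lemma Aset_empty: "Aset {} = torus" by (simp add: Aset_def)

theorem theorem2p1:
  fixes \<epsilon> :: real
  assumes "\<epsilon> > 0"
  shows "(\<exists>Ss :: ('n::finite) tseries set. finite Ss \<and> (\<forall>S\<in>Ss. is_series S) \<and>
            (\<forall>G. qf_toric G \<longrightarrow> (mld G > ereal \<epsilon> \<longleftrightarrow> (\<exists>S\<in>Ss. belongs G S))))
       \<and> (\<exists>Ss :: ('n::finite) tseries set. finite Ss \<and> (\<forall>S\<in>Ss. is_series S) \<and>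
            (\<forall>G. qf_toric G \<longrightarrow> (mld G \<ge> ereal \<epsilon> \<longleftrightarrow> (\<exists>S\<in>Ss. belongs G S))))"
proof (intro conjI)
  obtain Ss where Ss: "Char (bad_gt \<epsilon>) (Aset {} :: (real^'n) set) Ss"
    using main_induct[OF dich_gt] by blast
  show "\<exists>Ss :: ('n::finite) tseries set. finite Ss \<and> (\<forall>S\<in>Ss. is_series S) \<and>
            (\<forall>G. qf_toric G \<longrightarrow> (mld G > ereal \<epsilon> \<longleftrightarrow> (\<exists>S\<in>Ss. belongs G S)))"
  proof (intro exI[of _ Ss] conjI allI impI ballI)
    show "finite Ss" using Ss by (simp add: Char_def)
    show "is_series S" if "S \<in> Ss" for S using Ss that by (simp add: Char_def)
    fix G :: "(real^'n) set" assume G: "qf_toric G"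
    then have Gt: "G \<subseteq> torus" "finite G" by (auto simp: qf_toric_def tsubgroup_def)
    have "mld G > ereal \<epsilon> \<longleftrightarrow> good (bad_gt \<epsilon>) G" by (rule mld_gt[OF Gt(2)])
    also have "\<dots> \<longleftrightarrow> (\<exists>S\<in>Ss. belongs G S)" using Ss G Gt by (simp add: Char_def Aset_empty)
    finally show "mld G > ereal \<epsilon> \<longleftrightarrow> (\<exists>S\<in>Ss. belongs G S)" .
  qed
  obtain Ss' where Ss': "Char (bad_ge \<epsilon>) (Aset {} :: (real^'n) set) Ss'"
    using main_induct[OF dich_ge] by blast
  show "\<exists>Ss :: ('n::finite) tseries set. finite Ss \<and> (\<forall>S\<in>Ss. is_series S) \<and>
            (\<forall>G. qf_toric G \<longrightarrow> (mld G \<ge> ereal \<epsilon> \<longleftrightarrow> (\<exists>S\<in>Ss. belongs G S)))"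
  proof (intro exI[of _ Ss'] conjI allI impI ballI)
    show "finite Ss'" using Ss' by (simp add: Char_def)
    show "is_series S" if "S \<in> Ss'" for S using Ss' that by (simp add: Char_def)
    fix G :: "(real^'n) set" assume G: "qf_toric G"
    then have Gt: "G \<subseteq> torus" by (auto simp: qf_toric_def tsubgroup_def)
    have "mld G \<ge> ereal \<epsilon> \<longleftrightarrow> good (bad_ge \<epsilon>) G" by (rule mld_ge)
    also have "\<dots> \<longleftrightarrow> (\<exists>S\<in>Ss'. belongs G S)" using Ss' G Gt by (simp add: Char_def Aset_empty)
    finally show "mld G \<ge> ereal \<epsilon> \<longleftrightarrow> (\<exists>S\<in>Ss'. belongs G S)" .
  qed
qed

end
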